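(* Let $n$ be even, $k\ge2$, and let $f(x)=a_0(x)+2a_1(x)+\cdots+2^{k-1}a_{k-1}(x)$ from $\mathbb{V}_n$ to $\mathbb{Z}_{2^k}$ be gbent. Then its generalized Gray map $\psi(f):\mathbb{V}_n\times\mathbb{F}_2^{k-1}\to\mathbb{F}_2$, $\psi(f)(x,y_0,\ldots,y_{k-2})=\bigoplus_{i=0}^{k-2}a_i(x)y_i\oplus a_{k-1}(x)$, is $(k-1)$-plateaued, i.e. $\mathcal{W}_{\psi(f)}(w)\in\{0,\pm2^{n/2+k-1}\}$ for all $w\in\mathbb{V}_n\times\mathbb{F}_2^{k-1}$.
   Context: $\mathbb{V}_n$ is an $n$-dimensional $\mathbb{F}_2$-vector space with inner product $u\cdot x$; on $\mathbb{V}_n\times\mathbb{F}_2^{k-1}$ use the inner product $(u,z)\cdot(x,y)=u\cdot x\oplus z\cdot y$. $\mathcal{W}_F(w)=\sum_v(-1)^{F(v)\oplus w\cdot v}$. A Boolean function in $N$ variables is $s$-plateaued if its Walsh values lie in $\{0,\pm2^{(N+s)/2}\}$. $f$ is gbent if $|\sum_x\zeta_{2^k}^{f(x)}(-1)^{u\cdot x}|=2^{n/2}$ for all $u$, $\zeta_{2^k}=e^{2\pi i/2^k}$. *)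

theory Defs
  imports Complex_Main
begin

definition vecs :: "nat \<Rightarrow> bool list set" where
  "vecs n = {x. length x = n}"

definition dotp :: "bool list \<Rightarrow> bool list \<Rightarrow> bool" where
  "dotp u x = odd (card {i. i < length x \<and> i < length u \<and> u ! i \<and> x ! i})"

definition walsh :: "nat \<Rightarrow> (bool list \<Rightarrow> bool) \<Rightarrow> bool list \<Rightarrow> int" where
  "walsh N F w = (\<Sum>v\<in>vecs N. (-1::int) ^ of_bool (F v \<noteq> dotp w v))"

definition plateaued :: "nat \<Rightarrow> nat \<Rightarrow> (bool list \<Rightarrow> bool) \<Rightarrow> bool" where
  "plateaued N s F \<longleftrightarrow>
     (\<forall>w\<in>vecs N. real_of_int (walsh N F w) \<in> {0, 2 powr ((real N + real s) / 2), - (2 powr ((real N + real s) / 2))})"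

definition zeta :: "nat \<Rightarrow> complex" where
  "zeta k = cis (2 * pi / 2 ^ k)"

text \<open>f : V_n \<rightarrow> Z_{2^k} (values taken in {0..<2^k}) is gbent.\<close>
definition gbent :: "nat \<Rightarrow> nat \<Rightarrow> (bool list \<Rightarrow> nat) \<Rightarrow> bool" where
  "gbent n k f \<longleftrightarrow>
     (\<forall>u\<in>vecs n. cmod (\<Sum>x\<in>vecs n. zeta k ^ f x * (-1) ^ of_bool (dotp u x)) = 2 powr (real n / 2))"

definition gfun :: "nat \<Rightarrow> (nat \<Rightarrow> bool list \<Rightarrow> bool) \<Rightarrow> bool list \<Rightarrow> nat" where
  "gfun k a x = (\<Sum>i<k. 2 ^ i * of_bool (a i x))"

text \<open>Generalized Gray map psi(f) on V_n x F_2^(k-1), an element (x,y) encoded as the list x @ y.\<close>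
definition gray :: "nat \<Rightarrow> nat \<Rightarrow> (nat \<Rightarrow> bool list \<Rightarrow> bool) \<Rightarrow> bool list \<Rightarrow> bool" where
  "gray n k a v = (let x = take n v; y = drop n v in
     odd (card {i. i < k - 1 \<and> a i x \<and> y ! i}) \<noteq> a (k - 1) x)"

end

theory Submission imports Defs "Berlekamp_Zassenhaus.Factor_Bound" begin

lemma zeta_Suc: "zeta (Suc m) = cis (pi / 2^m)"
  unfolding zeta_def by (simp add: field_simps)

lemma zeta_pow: "zeta (Suc m) ^ r = cis (real r * pi / 2^m)"
  unfolding zeta_Suc DeMoivre by (simp add: field_simps)

lemma zeta_M: "zeta (Suc m) ^ (2^m) = -1"
  unfolding zeta_pow by simp

lemma zeta_2M: "zeta (Suc m) ^ (2*2^m) = 1"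
proof -
  have "zeta (Suc m) ^ (2*2^m) = (zeta (Suc m) ^ (2^m))^2" by (simp only: power_mult[symmetric] mult.commute)
  then show ?thesis by (simp add: zeta_M)
qed

lemma zeta_norm: "cmod (zeta (Suc m)) = 1"
  unfolding zeta_Suc by simp

lemma zeta_ne1: "zeta (Suc m) \<noteq> 1"
  using zeta_M[of m] by auto

lemma zeta_ne0: "zeta (Suc m) \<noteq> 0"
  using zeta_norm[of m] by auto

lemma zeta_cnj: "cnj (zeta (Suc m)) = zeta (Suc m) ^ (2*2^m - 1)"
proof -
  let ?z = "zeta (Suc m)"
  have a: "cnj ?z * ?z = 1" using zeta_norm[of m]
    by (metis complex_norm_square mult.commute of_real_1 power_one)
  have b: "?z ^ (2*2^m - 1) * ?z = 1"
    using zeta_2M[of m] by (metis One_nat_def Suc_pred mult_pos_pos pos2 power_Suc2 zero_less_power)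
  from a b show ?thesis using zeta_ne0[of m]
    by (metis mult_cancel_right)
qed

definition FF :: "nat \<Rightarrow> int poly" where "FF m = [:0,1:]^(2^m) + 1"

lemma sq_expand: "(1 + Y + 2*W)^2 = 1 + Y^2 + 2*(Y + 2*W + 2*Y*W + 2*W^2 :: 'a::comm_ring_1)"
  by (simp add: power2_eq_square algebra_simps)

lemma base_lin1: "(2::int poly) * [:0,c:] = [:0,2*c:]"
  by (simp add: numeral_poly)
lemma base_lin: "([:1, 2*c+1:] :: int poly) = 1 + [:0,1:] + 2 * [:0,c:]"
  unfolding base_lin1 by (simp add: poly_eq_iff coeff_pCons split: nat.split)

lemma binom_pow2: "\<exists>W. ([:1, 2*c+1:] :: int poly)^(2^m) = 1 + [:0,1:]^(2^m) + 2 * W"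
proof (induction m)
  case 0
  show ?case apply (rule exI[of _ "[:0,c:]"]) using base_lin[of c] by (simp only: power_0 power_one_right)
next
  case (Suc m)
  then obtain W where W: "([:1, 2*c+1:] :: int poly)^(2^m) = 1 + [:0,1:]^(2^m) + 2 * W" by blast
  let ?Y = "[:0,1::int:]^(2^m)"
  have e1: "([:1, 2*c+1:] :: int poly)^(2^Suc m) = (([:1, 2*c+1:] :: int poly)^(2^m))^2"
    by (simp only: power_mult[symmetric] power_Suc mult.commute)
  have e2: "?Y^2 = [:0,1:]^(2^Suc m)" by (simp only: power_mult[symmetric] power_Suc mult.commute)
  show ?case unfolding e1 W sq_expand e2 by blast
qed

lemma X_pow: "[:0,1:]^n = monom 1 n"
  by (simp add: monom_altdef)

lemma FF_alt: "FF m = monom 1 (2^m) + 1"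
  unfolding FF_def X_pow ..

lemma degree_FF: "degree (FF m) = 2^m"
  unfolding FF_alt by (subst degree_add_eq_left) (auto simp: degree_monom_eq)

lemma coeff_FF_lead: "coeff (FF m) (2^m) = 1"
  unfolding FF_alt by simp

lemma FF_ne0: "FF m \<noteq> 0"
  using degree_FF[of m] by auto


lemma poly_FF_1: "poly (FF m) 1 = 2"
  unfolding FF_alt by (simp add: poly_monom)

lemma pcompose_pow: "pcompose (p^n) q = (pcompose p q)^n"
  by (induct n) (simp_all add: pcompose_mult pcompose_1)

lemma two_times_smult: "(2::int poly) * W = smult 2 W"
  by (simp add: numeral_poly)

lemma alg1: "1 + Y + 2*W + 1 = Y + 2*(W+1::'a::comm_ring_1)"
  by (simp add: algebra_simps)

lemma Fp: "\<exists>V. pcompose (FF m) [:1,1:] = [:0,1:]^(2^m) + smult 2 V"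
proof -
  obtain W where W: "([:1, 2*0+1:] :: int poly)^(2^m) = 1 + [:0,1:]^(2^m) + 2 * W"
    using binom_pow2[of 0 m] by blast
  have "pcompose (FF m) [:1,1:] = [:1,1:]^(2^m) + 1"
    unfolding FF_def by (simp add: pcompose_add pcompose_pow pcompose_1 pcompose_pCons)
  also have "\<dots> = [:0,1:]^(2^m) + 2 * (W+1)" using W alg1 by simp
  finally show ?thesis unfolding two_times_smult by blast
qed

abbreviation "Fp m \<equiv> pcompose (FF m) [:1,1::int:]"

lemma Fp_even: "i < 2^m \<Longrightarrow> even (coeff (Fp m) i)"
proof -
  assume i: "i < 2^m"
  obtain V where V: "Fp m = [:0,1:]^(2^m) + smult 2 V" using Fp by blast
  show ?thesis unfolding V X_pow using i by simp
qed

lemma Fp_0: "coeff (Fp m) 0 = 2"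
  using poly_FF_1[of m] by (simp add: pcompose_coeff_0)

lemma Fp_deg: "degree (Fp m) = 2^m"
  by (simp add: degree_pcompose degree_FF)

lemma Fp_lead: "coeff (Fp m) (2^m) = 1"
proof -
  have "lead_coeff (Fp m) = lead_coeff (FF m) * lead_coeff [:1,1::int:] ^ degree (FF m)"
    by (rule lead_coeff_comp) simp
  then show ?thesis using Fp_deg[of m] degree_FF[of m] coeff_FF_lead[of m] by simp
qed

lemma Fp_aux:
  assumes FGH: "Fp m = G * H" and dG: "degree G < 2^m" and oH: "odd (coeff H 0)"
  shows False
proof -
  have ev: "i \<le> degree G \<Longrightarrow> even (coeff G i)" for i
  proof (induction i rule: less_induct)
    case (less i)
    have "coeff (Fp m) i = (\<Sum>j\<le>i. coeff G j * coeff H (i-j))"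
      unfolding FGH by (rule coeff_mult)
    also have "\<dots> = coeff G i * coeff H (i - i) + (\<Sum>j\<in>{..i}-{i}. coeff G j * coeff H (i-j))"
      by (subst sum.remove[of _ i]) auto
    also have "{..i}-{i} = {..<i}" by auto
    finally have eq: "coeff (Fp m) i = coeff G i * coeff H 0 + (\<Sum>j<i. coeff G j * coeff H (i-j))" by simp
    have "even (\<Sum>j<i. coeff G j * coeff H (i-j))"
      by (rule dvd_sum) (use less in auto)
    moreover have "even (coeff (Fp m) i)" using Fp_even[of i m] less dG by simp
    ultimately have "even (coeff G i * coeff H 0)" using eq by (metis dvd_add_left_iff)
    then show ?case using oH by simp
  qed
  have F0: "Fp m \<noteq> 0" using Fp_0[of m] by (metis coeff_0 zero_neq_numeral)
  then have G0: "G \<noteq> 0" and H0: "H \<noteq> 0" using FGH by auto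
  have "lead_coeff (Fp m) = lead_coeff G * lead_coeff H" unfolding FGH by (rule lead_coeff_mult)
  then have "1 = lead_coeff G * lead_coeff H" using Fp_lead[of m] Fp_deg[of m] by simp
  moreover have "even (lead_coeff G)" using ev by simp
  ultimately show False by (metis dvd_mult2 odd_one)
qed

lemma FF_irred:
  assumes "FF m = G * H" shows "degree G = 0 \<or> degree H = 0"
proof (rule ccontr)
  assume "\<not> (degree G = 0 \<or> degree H = 0)"
  then have dG: "degree G > 0" and dH: "degree H > 0" by auto
  have G0: "G \<noteq> 0" and H0: "H \<noteq> 0" using FF_ne0[of m] assms by auto
  have sum: "degree G + degree H = 2^m" using degree_mult_eq[OF G0 H0] assms degree_FF[of m] by simp
  define G' where "G' = pcompose G [:1,1:]"
  define H' where "H' = pcompose H [:1,1:]"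
  have FGH: "Fp m = G' * H'" unfolding G'_def H'_def assms pcompose_mult ..
  have dG': "degree G' < 2^m" unfolding G'_def using sum dH by (simp add: degree_pcompose)
  have dH': "degree H' < 2^m" unfolding H'_def using sum dG by (simp add: degree_pcompose)
  have c0: "coeff G' 0 * coeff H' 0 = 2" using Fp_0[of m] unfolding FGH by (simp add: coeff_mult_0)
  show False
  proof (cases "odd (coeff H' 0)")
    case True
    then show False using Fp_aux[OF FGH dG'] by blast
  next
    case False
    show False
    proof (cases "odd (coeff G' 0)")
      case True
      have FHG: "Fp m = H' * G'" using FGH by (simp add: mult.commute)
      then show False using Fp_aux[OF FHG dH' True] by blast
    next
      case False2: False
      from False obtain y where y: "coeff H' 0 = 2*y" by (auto elim!: evenE)
      from False2 obtain x where x: "coeff G' 0 = 2*x" by (auto elim!: evenE)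
      have "4 * (x*y) = 2" using c0 unfolding x y by (simp add: algebra_simps)
      moreover have "\<forall>t::int. 4*t \<noteq> 2" by presburger
      ultimately show False by blast
    qed
  qed
qed


definition ev :: "nat \<Rightarrow> int poly \<Rightarrow> complex" where
  "ev m P = poly (of_int_poly P) (zeta (Suc m))"

lemma ev_add[simp]: "ev m (A + B) = ev m A + ev m B" unfolding ev_def by (simp add: hom_distribs)
lemma ev_diff[simp]: "ev m (A - B) = ev m A - ev m B" unfolding ev_def by (simp add: hom_distribs)
lemma ev_mult[simp]: "ev m (A * B) = ev m A * ev m B" unfolding ev_def by (simp add: hom_distribs)
lemma ev_power[simp]: "ev m (A ^ j) = ev m A ^ j" unfolding ev_def by (simp add: hom_distribs)
lemma ev_const[simp]: "ev m [:c:] = of_int c" unfolding ev_def of_int_hom.map_poly_pCons_hom by simp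
lemma ev_1[simp]: "ev m 1 = 1" unfolding ev_def by simp
lemma ev_X[simp]: "ev m [:0,1:] = zeta (Suc m)" unfolding ev_def by simp
lemma ev_smult[simp]: "ev m (smult c A) = of_int c * ev m A" unfolding ev_def by (simp add: hom_distribs)

lemma ev_FF: "ev m (FF m) = 0"
  unfolding FF_def ev_add ev_power ev_X ev_1 by (simp add: zeta_M)

interpretation ofrc: map_poly_comm_ring_hom "of_rat :: rat \<Rightarrow> complex" ..

lemma rat_complex_map: "map_poly (of_rat :: rat \<Rightarrow> complex) (map_poly rat_of_int p) = of_int_poly p"
  by (simp add: map_poly_map_poly o_def)

lemma LI:
  assumes P0: "P \<noteq> 0" and dP: "degree P < 2^m"
  shows "ev m P \<noteq> 0"
proof
  assume E: "ev m P = 0"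
  let ?z = "zeta (Suc m)"
  let ?h = "map_poly (of_rat :: rat \<Rightarrow> complex)"
  define Fq where "Fq = map_poly rat_of_int (FF m)"
  define Pq where "Pq = map_poly rat_of_int P"
  define g where "g = gcd Fq Pq"
  have bez: "fst (bezout_coefficients Fq Pq) * Fq + snd (bezout_coefficients Fq Pq) * Pq = g"
    unfolding g_def by (rule bezout_coefficients_fst_snd)
  have hF: "poly (?h Fq) ?z = 0" unfolding Fq_def rat_complex_map using ev_FF[of m] by (simp add: ev_def)
  have hP: "poly (?h Pq) ?z = 0" unfolding Pq_def rat_complex_map using E by (simp add: ev_def)
  have hg: "poly (?h g) ?z = 0"
    unfolding bez[symmetric] by (simp add: ofrc.hom_add ofrc.hom_mult hF hP)
  have Fq0: "Fq \<noteq> 0" unfolding Fq_def using FF_ne0[of m] by simp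
  have Pq0: "Pq \<noteq> 0" unfolding Pq_def using P0 by simp
  have g0: "g \<noteq> 0" unfolding g_def using Fq0 by simp
  have dg: "degree g \<noteq> 0"
  proof
    assume "degree g = 0"
    then obtain c where c: "g = [:c:]" by (metis degree_eq_zeroE)
    then have "c \<noteq> 0" using g0 by simp
    then show False using hg c by simp
  qed
  have "g dvd Pq" unfolding g_def by simp
  then have "degree g \<le> degree Pq" using Pq0 by (rule dvd_imp_degree_le)
  then have dgP: "degree g < 2^m" using dP unfolding Pq_def by simp
  have "g dvd Fq" unfolding g_def by simp
  then obtain h2 where Fgh: "Fq = g * h2" by (elim dvdE)
  have h20: "h2 \<noteq> 0" using Fgh Fq0 by auto
  have "degree Fq = degree g + degree h2" using Fgh degree_mult_eq[OF g0 h20] by simp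
  moreover have "degree Fq = 2^m" unfolding Fq_def by (simp add: degree_FF)
  ultimately have dh: "degree h2 \<noteq> 0" using dgP by simp
  from rat_to_int_factor[OF Fgh[unfolded Fq_def]] obtain G H where
    "FF m = G * H" "degree G = degree g" "degree H = degree h2" by blast
  with FF_irred dg dh show False by metis
qed

lemma KEY:
  assumes "ev m P = 0" shows "\<exists>S. P = FF m * S"
proof -
  obtain q r where qr: "pseudo_divmod P (FF m) = (q, r)" by (metis surj_pair)
  note pd = pseudo_divmod[OF FF_ne0 qr]
  have lc: "coeff (FF m) (degree (FF m)) = 1" using degree_FF coeff_FF_lead by simp
  have Pqr: "P = FF m * q + r" using pd(1) unfolding lc by simp
  have "ev m r = 0" using assms Pqr ev_FF[of m]
    by (metis add_diff_cancel_left' diff_zero ev_diff ev_mult mult_zero_left)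
  then have "r = 0" using pd(2) LI[of r m] degree_FF[of m] by auto
  then show ?thesis using Pqr by auto
qed

lemma ev_parity:
  assumes "ev m P = ev m Q" shows "even (poly P 1 - poly Q 1)"
proof -
  have "ev m (P - Q) = 0" using assms by simp
  then obtain S where S: "P - Q = FF m * S" using KEY by blast
  have "poly P 1 - poly Q 1 = poly (P - Q) 1" by simp
  also have "\<dots> = 2 * poly S 1" unfolding S by (simp add: poly_FF_1)
  finally show ?thesis by simp
qed


abbreviation zz :: "nat \<Rightarrow> complex" where "zz m \<equiv> zeta (Suc m)"

lemma ev_0[simp]: "ev m 0 = 0" by (simp add: ev_def)
lemma ev_X'[simp]: "ev m (pCons 0 1) = zz m" unfolding ev_def by simp

lemma ev_sum: "ev m (sum f A) = (\<Sum>i\<in>A. ev m (f i))"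
  by (induct A rule: infinite_finite_induct) simp_all

lemma ev_two: "ev m 2 = 2"
  by (subst numeral_poly) simp

definition GS :: "nat \<Rightarrow> int poly" where "GS j = (\<Sum>i<j. [:0,1:]^i)"

lemma ev_GS: "(1 - zz m) * ev m (GS j) = 1 - zz m ^ j"
  unfolding GS_def ev_sum ev_power ev_X by (rule one_diff_power_eq[symmetric])

lemma poly_GS: "poly (GS j) 1 = int j"
  unfolding GS_def by (simp add: poly_sum)

lemma poly_cnj_int: "cnj (poly (of_int_poly P) x) = poly (of_int_poly P) (cnj x)"
  by (rule poly_cnj_real) (simp add: coeff_map_poly)

definition cj :: "nat \<Rightarrow> int poly \<Rightarrow> int poly" where
  "cj m P = pcompose P ([:0,1:]^(2*2^m - 1))"

lemma ev_pcompose: "ev m (pcompose P Q) = poly (of_int_poly P) (ev m Q)"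
  unfolding ev_def by (simp add: of_int_hom.map_poly_pcompose poly_pcompose)

lemma ev_cj: "ev m (cj m P) = cnj (ev m P)"
  unfolding cj_def ev_pcompose ev_power ev_X zeta_cnj[symmetric]
  by (simp add: ev_def poly_cnj_int)

lemma poly_cj1: "poly (cj m P) 1 = poly P 1"
  unfolding cj_def by (simp add: poly_pcompose)

lemma Xm1: "[:-1,1:] = [:0,1::int:] - 1"
  by (simp add: poly_eq_iff coeff_pCons split: nat.split)

lemma pi_split:
  assumes "even (poly h 1)" shows "\<exists>h'. ev m h = (1 - zz m) * ev m h'"
proof -
  obtain d where d: "poly h 1 = 2 * d" using assms by (elim evenE)
  have "poly (h - [:poly h 1:]) 1 = 0" by simp
  then have "[:-1,1:] dvd (h - [:poly h 1:])" by (metis poly_eq_0_iff_dvd)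
  then obtain S where S: "h - [:poly h 1:] = [:-1,1:] * S" by (elim dvdE)
  have "ev m h = ev m ([:-1,1:] * S) + ev m [:poly h 1:]" using S by (metis diff_add_cancel ev_add)
  also have "\<dots> = (zz m - 1) * ev m S + 2 * of_int d" unfolding Xm1 d by simp
  also have "2 = (1 - zz m) * ev m (GS (2^m))" using ev_GS[of m "2^m"] zeta_M[of m] by simp
  finally have "ev m h = (1 - zz m) * (of_int d * ev m (GS (2^m)) - ev m S)"
    by (simp add: algebra_simps)
  also have "\<dots> = (1 - zz m) * ev m (smult d (GS (2^m)) - S)" by simp
  finally show ?thesis by blast
qed

lemma pi_M: "\<exists>W. (1 - zz m)^(2^m) = 2 * ev m W \<and> poly W 1 = -1"
proof -
  obtain W where W: "([:1, 2*(-1)+1:] :: int poly)^(2^m) = 1 + [:0,1:]^(2^m) + 2 * W"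
    using binom_pow2[of "-1" m] by blast
  have e: "([:1, 2*(-1)+1:] :: int poly) = 1 - [:0,1:]"
    by (simp add: poly_eq_iff coeff_pCons split: nat.split)
  have W': "(1 - [:0,1:] :: int poly)^(2^m) = 1 + [:0,1:]^(2^m) + 2 * W" using W unfolding e .
  have "poly ((1 - [:0,1:] :: int poly)^(2^m)) 1 = 0" by simp
  then have "poly (1 + [:0,1:]^(2^m) + 2 * W :: int poly) 1 = 0" unfolding W' .
  then have pW: "poly W 1 = -1" by simp
  have "ev m ((1 - [:0,1:] :: int poly)^(2^m)) = ev m (1 + [:0,1:]^(2^m) + 2 * W)" unfolding W' ..
  then have "(1 - zz m)^(2^m) = 1 + zz m ^(2^m) + 2 * ev m W" by (simp add: ev_two)
  then have "(1 - zz m)^(2^m) = 2 * ev m W" by (simp add: zeta_M)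
  with pW show ?thesis by blast
qed

lemma val_lemma:
  "\<exists>t\<le>N. \<exists>h. ev m P = (1 - zz m)^t * ev m h \<and> (t = N \<or> odd (poly h 1))"
proof (induction N)
  case 0
  show ?case by (rule exI[of _ 0]) auto
next
  case (Suc N)
  then obtain t h where t: "t \<le> N" and h: "ev m P = (1 - zz m)^t * ev m h" and o: "t = N \<or> odd (poly h 1)"
    by blast
  show ?case
  proof (cases "odd (poly h 1)")
    case True
    then show ?thesis using t h by (intro exI[of _ t]) auto
  next
    case False
    then have tN: "t = N" using o by simp
    from pi_split[OF _] False obtain h' where "ev m h = (1 - zz m) * ev m h'" by (metis)
    then have "ev m P = (1 - zz m)^(Suc N) * ev m h'" using h tN by simp
    then show ?thesis by (intro exI[of _ "Suc N"]) auto
  qed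
qed

lemma cnj_pi: "1 - cnj (zz m) = (1 - zz m) * ev m (GS (2*2^m - 1))"
  by (simp add: zeta_cnj ev_GS)

lemma poly_GS_odd: "odd (poly (GS (2*2^m - 1)) 1)"
proof -
  have "(0::nat) < 2^m" by simp
  moreover have "\<forall>x::nat. 0 < x \<longrightarrow> odd (2*x - 1)" by presburger
  ultimately have "odd (2*2^m - 1::nat)" by blast
  then show ?thesis unfolding poly_GS by simp
qed

lemma pi_ne0: "1 - zz m \<noteq> 0"
  using zeta_ne1[of m] by simp

lemma descent1:
  assumes E: "ev m P * cnj (ev m P) = 4^e" and e: "e \<ge> 1"
  shows "\<exists>Q. ev m P = 2 * ev m Q"
proof -
  let ?p = "1 - zz m"
  obtain W where W: "?p^(2^m) = 2 * ev m W" and pW: "poly W 1 = -1" using pi_M by blast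
  obtain t h where t: "t \<le> 2^m" and h: "ev m P = ?p^t * ev m h" and o: "t = 2^m \<or> odd (poly h 1)"
    using val_lemma by blast
  show ?thesis
  proof (cases "t = 2^m")
    case True
    then have "ev m P = 2 * ev m (W * h)" using h W by simp
    then show ?thesis by blast
  next
    case False
    then have tM: "t < 2^m" and oh: "odd (poly h 1)" using t o by auto
    define V where "V = GS (2*2^m - 1)"
    have cP: "cnj (ev m P) = ?p^t * ev m (V^t * cj m h)"
      unfolding h V_def by (simp add: cnj_pi ev_cj power_mult_distrib)
    define L where "L = V^t * h * cj m h * W^(2*e)"
    have a1: "2^m \<le> 2^m * e" using e by simp
    have a2: "(2::nat)^m * (2*e) = 2 * (2^m * e)" by simp
    have te: "2*t < 2^m * (2*e)" using tM a1 a2 by linarith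
    then have r: "2^m * (2*e) - 2*t > 0" by simp
    have "?p^(2^m * (2*e)) = (2 * ev m W)^(2*e)" unfolding power_mult W ..
    also have "\<dots> = 4^e * ev m W^(2*e)" by (simp add: power_mult_distrib power_mult)
    also have "\<dots> = ?p^(2*t) * ev m L"
      unfolding E[symmetric] L_def using h cP by (simp add: power_mult_distrib mult_2 power_add)
    finally have eq1: "?p^(2*t) * ?p^(2^m * (2*e) - 2*t) = ?p^(2*t) * ev m L"
      using te by (simp add: power_add[symmetric])
    have "ev m ((1 - [:0,1:])^(2^m * (2*e) - 2*t)) = ev m L"
      using eq1 pi_ne0[of m] by simp
    from ev_parity[OF this] have "even (0 - poly L 1)" using r by simp
    moreover have "odd (poly L 1)" unfolding L_def using oh pW poly_GS_odd[of m]
      by (simp add: poly_cj1 V_def)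
    ultimately show ?thesis by simp
  qed
qed


lemma descent_all:
  "ev m P * cnj (ev m P) = 4^e \<Longrightarrow> \<exists>Q. ev m P = 2^e * ev m Q \<and> ev m Q * cnj (ev m Q) = 1"
proof (induction e arbitrary: P)
  case 0
  then show ?case by (intro exI[of _ P]) simp
next
  case (Suc e)
  obtain Q1 where Q1: "ev m P = 2 * ev m Q1" using descent1[OF Suc.prems] by auto
  have "4 * (ev m Q1 * cnj (ev m Q1)) = 4 * 4^e" using Suc.prems unfolding Q1 by (simp add: algebra_simps)
  then have "ev m Q1 * cnj (ev m Q1) = 4^e" by simp
  from Suc.IH[OF this] obtain Q where "ev m Q1 = 2^e * ev m Q" "ev m Q * cnj (ev m Q) = 1" by blast
  then show ?case using Q1 by (intro exI[of _ Q]) simp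
qed

lemma zeta_eq1: assumes "zz m ^ r = 1" shows "(2*2^m::nat) dvd r"
proof -
  have c: "cis (real r * pi / 2^m) = 1" using assms unfolding zeta_pow .
  have "cos (real r * pi / 2^m) = Re (cis (real r * pi / 2^m))" by simp
  also have "\<dots> = 1" unfolding c by simp
  finally obtain n :: int where n: "real r * pi / 2^m = real_of_int n * 2 * pi" unfolding cos_one_2pi_int by blast
  have "real r = (real r * pi / 2^m) * 2^m / pi" by simp
  also have "\<dots> = real_of_int n * 2 * 2^m" unfolding n by simp
  finally have "real_of_int (int r) = real_of_int (n * (2 * 2^m))" by simp
  then have "int r = n * (2 * 2^m)" by (simp only: of_int_eq_iff)
  then have "int (2*2^m) dvd int r" by simp
  then show ?thesis by (simp only: of_nat_dvd_iff)
qed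

lemma cnj_zz_pow: "cnj (zz m ^ x) = zz m ^ ((2*2^m - 1) * x)"
  by (simp add: zeta_cnj power_mult)

lemma orth:
  assumes i: "i < 2^m" and j: "j < 2^m"
  shows "(\<Sum>l<2^m. zz m ^ ((2*l+1)*i) * cnj (zz m ^ ((2*l+1)*j))) = (if i = j then of_nat (2^m) else 0)"
proof (cases "i = j")
  case True
  have "zz m ^ x * cnj (zz m ^ x) = 1" for x
    using complex_norm_square[of "zz m ^ x"] by (simp add: norm_power zeta_norm)
  then show ?thesis using True by simp
next
  case False
  define K where "K = 2*2^m - (1::nat)"
  define D where "D = i + K*j"
  define q where "q = zz m ^ (2*D)"
  have tm: "zz m ^ ((2*l+1)*i) * cnj (zz m ^ ((2*l+1)*j)) = zz m ^ D * q^l" for l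
  proof -
    have "zz m ^ ((2*l+1)*i) * cnj (zz m ^ ((2*l+1)*j)) = zz m ^ ((2*l+1)*i + K*((2*l+1)*j))"
      unfolding cnj_zz_pow K_def by (simp add: power_add)
    also have "(2*l+1)*i + K*((2*l+1)*j) = D + (2*D)*l" unfolding D_def by (simp add: algebra_simps)
    finally show ?thesis unfolding q_def by (simp add: power_add power_mult)
  qed
  have qM: "q^(2^m) = 1" unfolding q_def
    by (metis mult.assoc mult.commute power_mult power_one zeta_2M)
  have q1: "q \<noteq> 1"
  proof
    assume "q = 1"
    then have "(2*2^m::nat) dvd (2*D)" using zeta_eq1 unfolding q_def by blast
    then have "(2^m::nat) dvd D" by simp
    then have "int (2^m) dvd int i + int K * int j" unfolding D_def by (metis of_nat_add of_nat_dvd_iff of_nat_mult)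
    moreover have "int K = 2 * 2^m - 1" unfolding K_def by simp
    ultimately have "int (2^m) dvd (int i - int j) + int (2^m) * (2 * int j)"
      by (simp add: algebra_simps)
    then have dv: "int (2^m) dvd (int i - int j)" by (metis dvd_add_left_iff dvd_triv_left)
    have "int i - int j \<noteq> 0" using False by simp
    from dvd_imp_le_int[OF this dv] have "int (2^m) \<le> \<bar>int i - int j\<bar>" by simp
    then show False using i j by linarith
  qed
  have "(\<Sum>l<2^m. zz m ^ ((2*l+1)*i) * cnj (zz m ^ ((2*l+1)*j))) = zz m ^ D * (\<Sum>l<2^m. q^l)"
    unfolding tm by (simp add: sum_distrib_left)
  also have "(\<Sum>l<2^m. q^l) = 0" unfolding sum_gp_strict using q1 qM by simp
  finally show ?thesis using False by simp
qed


lemma poly_FF_of: "poly (of_int_poly (FF m)) y = (y::complex)^(2^m) + 1"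
  unfolding FF_def by (simp add: hom_distribs)

lemma circle_gen:
  assumes ER: "ev m R * cnj (ev m R) = 1" and xM: "x^(2^m) = -1" and cx: "cnj x = x ^ (2*2^m - 1)"
  shows "poly (of_int_poly R) x * cnj (poly (of_int_poly R) x) = 1"
proof -
  have "ev m (R * cj m R - 1) = 0" using ER by (simp add: ev_cj)
  then obtain S where S: "R * cj m R - 1 = FF m * S" using KEY by blast
  have F0: "poly (of_int_poly (FF m)) x = 0" unfolding poly_FF_of xM by simp
  have "poly (of_int_poly (R * cj m R - 1)) x = 0" unfolding S by (simp add: hom_distribs F0)
  then have e1: "poly (of_int_poly R) x * poly (of_int_poly (cj m R)) x = 1" by (simp add: hom_distribs)
  have "poly (of_int_poly (cj m R)) x = poly (of_int_poly R) (x ^ (2*2^m - 1))"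
    unfolding cj_def by (simp add: of_int_hom.map_poly_pcompose poly_pcompose hom_distribs)
  also have "\<dots> = cnj (poly (of_int_poly R) x)" unfolding cx[symmetric] poly_cnj_int ..
  finally show ?thesis using e1 by simp
qed

lemma unit_circle_vals:
  assumes ER: "ev m R * cnj (ev m R) = 1"
  shows "poly (of_int_poly R) (zz m ^ (2*l+1)) * cnj (poly (of_int_poly R) (zz m ^ (2*l+1))) = 1"
proof (rule circle_gen[OF ER])
  have "(zz m ^ (2*l+1))^(2^m) = (zz m ^ (2^m))^(2*l+1)" by (simp only: power_mult[symmetric] mult.commute)
  then show "(zz m ^ (2*l+1))^(2^m) = -1" by (simp add: zeta_M)
  show "cnj (zz m ^ (2*l+1)) = (zz m ^ (2*l+1)) ^ (2*2^m - 1)"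
    unfolding complex_cnj_power zeta_cnj by (simp only: power_mult[symmetric] mult.commute)
qed

lemma poly_expand:
  assumes dR: "degree R < 2^m"
  shows "poly (of_int_poly R) y = (\<Sum>i<2^m. of_int (coeff R i) * (y::complex)^i)"
proof -
  have "poly (of_int_poly R) y = (\<Sum>i\<le>degree R. of_int (coeff R i) * y^i)"
    unfolding poly_altdef by (simp add: of_int_hom.coeff_map_poly_hom)
  also have "\<dots> = (\<Sum>i<2^m. of_int (coeff R i) * y^i)"
    by (rule sum.mono_neutral_left) (use dR in \<open>auto simp: coeff_eq_0\<close>)
  finally show ?thesis .
qed

lemma ORTH:
  assumes dR: "degree R < 2^m" and ER: "ev m R * cnj (ev m R) = 1"
  shows "(\<Sum>i<2^m. (coeff R i)^2) = 1"
proof -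
  define r where "r i = (of_int (coeff R i) :: complex)" for i
  define T where "T l i j = (zz m ^ (2*l+1))^i * cnj ((zz m ^ (2*l+1))^j)" for l i j :: nat
  let ?M = "{..<(2::nat)^m}"
  have orth': "i \<in> ?M \<Longrightarrow> j \<in> ?M \<Longrightarrow> (\<Sum>l\<in>?M. T l i j) = (if i=j then of_nat (2^m) else 0)" for i j
    unfolding T_def power_mult[symmetric] using orth by auto
  have B: "poly (of_int_poly R) (zz m^(2*l+1)) * cnj (poly (of_int_poly R) (zz m^(2*l+1)))
      = (\<Sum>i\<in>?M. \<Sum>j\<in>?M. r i * r j * T l i j)" for l
    unfolding poly_expand[OF dR] cnj_sum sum_product
    by (intro sum.cong refl) (simp add: r_def T_def algebra_simps)
  have "(\<Sum>l\<in>?M. poly (of_int_poly R) (zz m^(2*l+1)) * cnj (poly (of_int_poly R) (zz m^(2*l+1)))) = (\<Sum>l\<in>?M. 1)"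
    by (rule sum.cong[OF refl], rule unit_circle_vals[OF ER])
  then have "of_nat (2^m) = (\<Sum>l\<in>?M. poly (of_int_poly R) (zz m^(2*l+1)) * cnj (poly (of_int_poly R) (zz m^(2*l+1))))"
    by simp
  also have "\<dots> = (\<Sum>l\<in>?M. \<Sum>i\<in>?M. \<Sum>j\<in>?M. r i * r j * T l i j)" by (rule sum.cong[OF refl], rule B)
  also have "\<dots> = (\<Sum>i\<in>?M. \<Sum>l\<in>?M. \<Sum>j\<in>?M. r i * r j * T l i j)" by (rule sum.swap)
  also have "\<dots> = (\<Sum>i\<in>?M. \<Sum>j\<in>?M. \<Sum>l\<in>?M. r i * r j * T l i j)"
    by (rule sum.cong[OF refl], rule sum.swap)
  also have "\<dots> = (\<Sum>i\<in>?M. \<Sum>j\<in>?M. r i * r j * (\<Sum>l\<in>?M. T l i j))"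
    by (simp add: sum_distrib_left)
  also have "\<dots> = (\<Sum>i\<in>?M. \<Sum>j\<in>?M. (if i = j then r i * r j * of_nat (2^m) else 0))"
    by (intro sum.cong refl) (simp add: orth')
  also have "\<dots> = (\<Sum>i\<in>?M. r i * r i * of_nat (2^m))" by simp
  also have "\<dots> = of_int (\<Sum>i\<in>?M. (coeff R i)^2) * of_nat (2^m)"
    by (simp add: r_def sum_distrib_right power2_eq_square)
  finally have "of_int (\<Sum>i\<in>?M. (coeff R i)^2) * (of_nat (2^m) :: complex) = 1 * of_nat (2^m)" by simp
  moreover have "(of_nat (2^m) :: complex) \<noteq> 0" by simp
  ultimately have "(of_int (\<Sum>i\<in>?M. (coeff R i)^2) :: complex) = 1"
    using mult_cancel_right by blast
  then show ?thesis by (simp only: of_int_eq_1_iff)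
qed

lemma NT:
  assumes dP: "degree P < 2^m" and E: "ev m P * cnj (ev m P) = 4^e"
  shows "coeff P i \<in> {0, 2^e, -(2^e)}"
proof -
  obtain Q where Q: "ev m P = 2^e * ev m Q" and EQ: "ev m Q * cnj (ev m Q) = 1"
    using descent_all[OF E] by blast
  obtain q R where qr: "pseudo_divmod Q (FF m) = (q, R)" by (metis surj_pair)
  note pd = pseudo_divmod[OF FF_ne0 qr]
  have lc: "coeff (FF m) (degree (FF m)) = 1" using degree_FF coeff_FF_lead by simp
  have Qqr: "Q = FF m * q + R" using pd(1) unfolding lc by simp
  have dR: "degree R < 2^m" using pd(2) degree_FF[of m] by auto
  have eQR: "ev m Q = ev m R" using Qqr ev_FF[of m] by (metis add_0 ev_add ev_mult mult_zero_left)
  define D where "D = P - smult (2^e) R"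
  have "ev m D = 0" unfolding D_def using Q eQR by simp
  moreover have "degree D < 2^m" unfolding D_def
    using degree_diff_le_max[of P "smult (2^e) R"] degree_smult_le[of "2^e" R] dP dR by linarith
  ultimately have "D = 0" using LI by blast
  then have PR: "P = smult (2^e) R" unfolding D_def by simp
  have S1: "(\<Sum>i<2^m. (coeff R i)^2) = 1" using ORTH[OF dR] EQ eQR by simp
  have "coeff R i \<in> {0, 1, -1}"
  proof (cases "i < 2^m")
    case True
    have "(coeff R i)^2 \<le> (\<Sum>i<2^m. (coeff R i)^2)"
      by (rule member_le_sum) (use True in auto)
    then have "(coeff R i)^2 \<le> 1" using S1 by simp
    then have "\<bar>coeff R i\<bar> \<le> 1" by (simp only: abs_square_le_1)
    then show ?thesis by auto
  next
    case False
    then have "coeff R i = 0" using dR by (simp add: coeff_eq_0)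
    then show ?thesis by simp
  qed
  then show ?thesis unfolding PR by auto
qed


fun dotr :: "bool list \<Rightarrow> bool list \<Rightarrow> bool" where
  "dotr (a#as) (b#bs) = ((a \<and> b) \<noteq> dotr as bs)"
| "dotr _ _ = False"

lemma card_suc: "card {i. i < Suc L \<and> Q i} = (if Q 0 then 1 else 0) + card {i. i < L \<and> Q (Suc i)}"
proof -
  define S where "S = {i. i < L \<and> Q (Suc i)}"
  have fS: "finite (Suc ` S)" unfolding S_def by simp
  have cS: "card (Suc ` S) = card S" by (rule card_image) simp
  show ?thesis
  proof (cases "Q 0")
    case True
    then have e: "{i. i < Suc L \<and> Q i} = insert 0 (Suc ` S)"
      unfolding S_def by (auto simp: less_Suc_eq_0_disj)
    have "card (insert 0 (Suc ` S)) = Suc (card (Suc ` S))"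
      using fS by (subst card_insert_disjoint) auto
    then show ?thesis using True e cS S_def by simp
  next
    case False
    then have e: "{i. i < Suc L \<and> Q i} = Suc ` S"
      unfolding S_def by (auto simp: less_Suc_eq_0_disj)
    then show ?thesis using False cS S_def by simp
  qed
qed

lemma dotp_alt: "dotp u x = odd (card {i. i < min (length x) (length u) \<and> u!i \<and> x!i})"
  unfolding dotp_def by (rule arg_cong[where f="\<lambda>S. odd (card S)"]) auto

lemma dotp_dotr: "dotp u x = dotr u x"
proof (induction u arbitrary: x)
  case Nil
  then show ?case by (simp add: dotp_alt)
next
  case (Cons a u)
  show ?case
  proof (cases x)
    case Nil
    then show ?thesis by (simp add: dotp_alt)
  next
    case (Cons b x')
    have "dotp (a#u) (b#x') = odd (card {i. i < Suc (min (length x') (length u)) \<and> (a#u)!i \<and> (b#x')!i})"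
      by (simp add: dotp_alt)
    also have "\<dots> = odd ((if a \<and> b then 1 else 0) + card {i. i < min (length x') (length u) \<and> u!i \<and> x'!i})"
      unfolding card_suc by simp
    also have "\<dots> = ((a \<and> b) \<noteq> dotp u x')" by (cases a; cases b) (simp_all add: dotp_alt)
    finally show ?thesis using Cons Cons.IH by simp
  qed
qed

lemma dotr_append: "length u = length x \<Longrightarrow> dotr (u@z) (x@y) = (dotr u x \<noteq> dotr z y)"
  by (induction u x rule: list_induct2) auto

lemma finite_vecs: "finite (vecs K)"
proof -
  have "vecs K = {xs. set xs \<subseteq> UNIV \<and> length xs = K}" unfolding vecs_def by auto
  then show ?thesis using finite_lists_length_eq[of "UNIV::bool set" K] by simp
qed

lemma vecs_Suc: "vecs (Suc K) = Cons True ` vecs K \<union> Cons False ` vecs K"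
  unfolding vecs_def by (auto simp: length_Suc_conv image_iff)

lemma sum_vecs_Suc: "sum f (vecs (Suc K)) = (\<Sum>t\<in>vecs K. f (True#t)) + (\<Sum>t\<in>vecs K. f (False#t))"
proof -
  have "sum f (vecs (Suc K)) = sum f (Cons True ` vecs K) + sum f (Cons False ` vecs K)"
    unfolding vecs_Suc by (rule sum.union_disjoint) (auto simp: finite_vecs)
  also have "sum f (Cons True ` vecs K) = (\<Sum>t\<in>vecs K. f (True#t))" by (subst sum.reindex) (auto simp: inj_on_def)
  also have "sum f (Cons False ` vecs K) = (\<Sum>t\<in>vecs K. f (False#t))" by (subst sum.reindex) (auto simp: inj_on_def)
  finally show ?thesis .
qed

lemma vecs_0: "vecs 0 = {[]}" unfolding vecs_def by auto

lemma char_sum: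
  "\<alpha> \<in> vecs K \<Longrightarrow> z \<in> vecs K \<Longrightarrow>
   (\<Sum>y\<in>vecs K. (-1::int) ^ of_bool ((dotr \<alpha> y \<noteq> dotr z y) \<noteq> b)) = (if \<alpha> = z then 2^K * (-1) ^ of_bool b else 0)"
proof (induction K arbitrary: \<alpha> z b)
  case 0
  then show ?case by (simp add: vecs_0 vecs_def)
next
  case (Suc K)
  obtain a \<alpha>' where A: "\<alpha> = a#\<alpha>'" "\<alpha>' \<in> vecs K" using Suc.prems(1) unfolding vecs_def by (cases \<alpha>) auto
  obtain c z' where Z: "z = c#z'" "z' \<in> vecs K" using Suc.prems(2) unfolding vecs_def by (cases z) auto
  have "(\<Sum>y\<in>vecs (Suc K). (-1::int) ^ of_bool ((dotr \<alpha> y \<noteq> dotr z y) \<noteq> b))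
      = (\<Sum>t\<in>vecs K. (-1::int) ^ of_bool ((dotr \<alpha>' t \<noteq> dotr z' t) \<noteq> (b \<noteq> (a \<noteq> c))))
      + (\<Sum>t\<in>vecs K. (-1::int) ^ of_bool ((dotr \<alpha>' t \<noteq> dotr z' t) \<noteq> b))"
    unfolding sum_vecs_Suc A Z by (intro arg_cong2[where f="(+)"] sum.cong refl) auto
  also have "\<dots> = (if \<alpha>' = z' then 2^K * (-1) ^ of_bool (b \<noteq> (a \<noteq> c)) else 0)
      + (if \<alpha>' = z' then 2^K * (-1) ^ of_bool b else 0)"
    by (simp only: Suc.IH[OF A(2) Z(2)])
  also have "\<dots> = (if \<alpha> = z then 2^Suc K * (-1) ^ of_bool b else 0)"
    unfolding A Z by (cases a; cases c; cases b) auto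
  finally show ?case .
qed


definition av :: "nat \<Rightarrow> (nat \<Rightarrow> bool list \<Rightarrow> bool) \<Rightarrow> bool list \<Rightarrow> bool list" where
  "av K a x = map (\<lambda>i. a i x) [0..<K]"

lemma av_vecs: "av K a x \<in> vecs K" unfolding av_def vecs_def by simp

lemma gray_eq:
  assumes x: "x \<in> vecs n" and y: "y \<in> vecs K" and k: "k = Suc K"
  shows "gray n k a (x@y) = (dotr (av K a x) y \<noteq> a K x)"
proof -
  have lx: "length x = n" and ly: "length y = K" using x y unfolding vecs_def by auto
  have "{i. i < k - 1 \<and> a i x \<and> y!i} = {i. i < length y \<and> i < length (av K a x) \<and> av K a x ! i \<and> y!i}"
    using ly k unfolding av_def by auto
  then have "odd (card {i. i < k - 1 \<and> a i x \<and> y!i}) = dotp (av K a x) y" unfolding dotp_def by simp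
  then show ?thesis unfolding gray_def Let_def using lx k by (simp add: dotp_dotr)
qed

lemma sum_append: "(\<Sum>v\<in>vecs (n+K). f v) = (\<Sum>x\<in>vecs n. \<Sum>y\<in>vecs K. f (x@y))"
proof -
  have img: "vecs (n+K) = (\<lambda>(x,y). x@y) ` (vecs n \<times> vecs K)"
  proof
    show "vecs (n+K) \<subseteq> (\<lambda>(x,y). x@y) ` (vecs n \<times> vecs K)"
    proof
      fix v assume "v \<in> vecs (n+K)"
      then have "(take n v, drop n v) \<in> vecs n \<times> vecs K" and "v = (\<lambda>(x,y). x@y) (take n v, drop n v)"
        unfolding vecs_def by auto
      then show "v \<in> (\<lambda>(x,y). x@y) ` (vecs n \<times> vecs K)" by blast
    qed
    show "(\<lambda>(x,y). x@y) ` (vecs n \<times> vecs K) \<subseteq> vecs (n+K)" unfolding vecs_def by auto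
  qed
  have inj: "inj_on (\<lambda>(x,y). x@y) (vecs n \<times> vecs K)"
    unfolding inj_on_def vecs_def by auto
  have "(\<Sum>v\<in>vecs (n+K). f v) = (\<Sum>p\<in>vecs n \<times> vecs K. f ((\<lambda>(x,y). x@y) p))"
    unfolding img using sum.reindex[OF inj, of f] by (simp add: o_def)
  also have "\<dots> = (\<Sum>x\<in>vecs n. \<Sum>y\<in>vecs K. f (x@y))"
    unfolding sum.cartesian_product by (intro sum.cong refl) auto
  finally show ?thesis .
qed

definition sgn_t :: "nat \<Rightarrow> (nat \<Rightarrow> bool list \<Rightarrow> bool) \<Rightarrow> bool list \<Rightarrow> bool list \<Rightarrow> int" where
  "sgn_t K a u x = (-1) ^ of_bool (a K x \<noteq> dotr u x)"

definition TT :: "nat \<Rightarrow> nat \<Rightarrow> (nat \<Rightarrow> bool list \<Rightarrow> bool) \<Rightarrow> bool list \<Rightarrow> bool list \<Rightarrow> int" where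
  "TT n K a u z = (\<Sum>x\<in>vecs n. if av K a x = z then sgn_t K a u x else 0)"

lemma bool_rearr: "(((A::bool) \<noteq> B) \<noteq> ((C::bool) \<noteq> D)) = ((A \<noteq> D) \<noteq> (B \<noteq> C))" by auto

lemma walsh_gray:
  assumes u: "u \<in> vecs n" and z: "z \<in> vecs K" and k: "k = Suc K"
  shows "walsh (n+K) (gray n k a) (u@z) = 2^K * TT n K a u z"
proof -
  have lu: "length u = n" using u unfolding vecs_def by auto
  have "walsh (n+K) (gray n k a) (u@z) = (\<Sum>x\<in>vecs n. \<Sum>y\<in>vecs K.
      (-1::int) ^ of_bool ((dotr (av K a x) y \<noteq> dotr z y) \<noteq> (a K x \<noteq> dotr u x)))"
    unfolding walsh_def sum_append
  proof (intro sum.cong refl)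
    fix x y assume x: "x \<in> vecs n" and y: "y \<in> vecs K"
    have lx: "length x = n" using x unfolding vecs_def by auto
    show "(-1::int) ^ of_bool (gray n k a (x@y) \<noteq> dotp (u@z) (x@y)) =
      (-1) ^ of_bool ((dotr (av K a x) y \<noteq> dotr z y) \<noteq> (a K x \<noteq> dotr u x))"
      unfolding gray_eq[OF x y k] dotp_dotr dotr_append[of u x, OF lu[unfolded lx[symmetric]]]
      by (simp only: bool_rearr)
  qed
  also have "\<dots> = (\<Sum>x\<in>vecs n. if av K a x = z then 2^K * sgn_t K a u x else 0)"
    by (intro sum.cong refl) (simp only: char_sum[OF av_vecs z] sgn_t_def)
  also have "\<dots> = 2^K * TT n K a u z"
    unfolding TT_def sum_distrib_left by (intro sum.cong refl) simp
  finally show ?thesis .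
qed


fun binv :: "bool list \<Rightarrow> nat" where
  "binv [] = 0"
| "binv (b#z) = of_bool b + 2 * binv z"

lemma av_Suc: "av (Suc K) a x = a 0 x # av K (\<lambda>i. a (Suc i)) x"
  unfolding av_def by (simp add: upt_conv_Cons map_Suc_upt[symmetric] del: upt_Suc)

lemma binv_av: "binv (av K a x) = (\<Sum>i<K. 2^i * of_bool (a i x))"
proof (induction K arbitrary: a)
  case 0
  then show ?case by (simp add: av_def)
next
  case (Suc K)
  have e: "2 * (\<Sum>i<K. 2^i * of_bool (a (Suc i) x)) = (\<Sum>i<K. 2^(Suc i) * of_bool (a (Suc i) x) :: nat)"
    by (simp only: sum_distrib_left mult.assoc[symmetric] power_Suc)
  show ?case unfolding av_Suc binv.simps Suc.IH sum.lessThan_Suc_shift e by simp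
qed

lemma binv_lt: "binv z < 2^(length z)"
  by (induction z) auto

lemma binv_inj: "length z = length z' \<Longrightarrow> binv z = binv z' \<Longrightarrow> z = z'"
proof (induction z z' rule: list_induct2)
  case Nil
  then show ?case by simp
next
  case (Cons b z c z')
  have e: "of_bool b + 2 * binv z = of_bool c + 2 * binv z'" using Cons.prems by simp
  have "b = c"
  proof (rule ccontr)
    assume "b \<noteq> c"
    then have "odd (of_bool b + 2 * binv z) \<noteq> odd (of_bool c + 2 * binv z')" by (cases b; cases c) auto
    then show False using e by simp
  qed
  then have "binv z = binv z'" using e by simp
  then show ?case using Cons.IH \<open>b = c\<close> by simp
qed

lemma gfun_split: "k = Suc K \<Longrightarrow> gfun k a x = binv (av K a x) + 2^K * of_bool (a K x)"
  unfolding gfun_def binv_av by simp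

lemma ev_monom: "ev m (monom c j) = of_int c * zz m ^ j"
  unfolding monom_altdef by simp

definition PP :: "nat \<Rightarrow> nat \<Rightarrow> (nat \<Rightarrow> bool list \<Rightarrow> bool) \<Rightarrow> bool list \<Rightarrow> int poly" where
  "PP n K a u = (\<Sum>z\<in>vecs K. monom (TT n K a u z) (binv z))"

lemma coeff_PP: "z0 \<in> vecs K \<Longrightarrow> coeff (PP n K a u) (binv z0) = TT n K a u z0"
proof -
  assume z0: "z0 \<in> vecs K"
  have "coeff (PP n K a u) (binv z0) = (\<Sum>z\<in>vecs K. if z = z0 then TT n K a u z else 0)"
    unfolding PP_def coeff_sum coeff_monom
  proof (intro sum.cong refl)
    fix z assume "z \<in> vecs K"
    then have "binv z = binv z0 \<longleftrightarrow> z = z0" using z0 binv_inj unfolding vecs_def by auto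
    then show "(if binv z = binv z0 then TT n K a u z else 0) = (if z = z0 then TT n K a u z else 0)" by simp
  qed
  also have "\<dots> = TT n K a u z0" using z0 by (simp add: finite_vecs)
  finally show ?thesis .
qed

lemma degree_PP: "degree (PP n K a u) < 2^K"
proof -
  have "\<forall>i. (i::nat) > 2^K - 1 \<longrightarrow> coeff (PP n K a u) i = 0"
  proof (intro allI impI)
    fix i :: nat assume i: "i > 2^K - 1"
    have "coeff (PP n K a u) i = (\<Sum>z\<in>vecs K. if binv z = i then TT n K a u z else 0)"
      unfolding PP_def coeff_sum coeff_monom ..
    also have "\<dots> = 0"
    proof (intro sum.neutral ballI)
      fix z assume "z \<in> vecs K"
      then have "binv z < 2^K" using binv_lt unfolding vecs_def by auto
      then show "(if binv z = i then TT n K a u z else 0) = 0" using i by auto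
    qed
    finally show "coeff (PP n K a u) i = 0" .
  qed
  then have "degree (PP n K a u) \<le> 2^K - 1" by (rule degree_le)
  moreover have "(0::nat) < 2^K" by simp
  ultimately show ?thesis by linarith
qed

lemma neg1_pow: "(-1::complex) ^ of_bool p * (-1) ^ of_bool q = of_int ((-1) ^ of_bool (p \<noteq> q))"
  by (cases p; cases q) auto

lemma H_eq:
  assumes k: "k = Suc K"
  shows "(\<Sum>x\<in>vecs n. zeta k ^ gfun k a x * (-1) ^ of_bool (dotp u x)) = ev K (PP n K a u)"
proof -
  have "(\<Sum>x\<in>vecs n. zeta k ^ gfun k a x * (-1) ^ of_bool (dotp u x))
      = (\<Sum>x\<in>vecs n. zz K ^ binv (av K a x) * of_int (sgn_t K a u x))"
  proof (intro sum.cong refl)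
    fix x
    have "zeta k ^ gfun k a x = zz K ^ binv (av K a x) * (zz K ^ (2^K)) ^ of_bool (a K x)"
      unfolding k gfun_split[OF refl] by (simp add: power_add power_mult)
    also have "\<dots> = zz K ^ binv (av K a x) * (-1) ^ of_bool (a K x)" by (simp add: zeta_M)
    finally show "zeta k ^ gfun k a x * (-1) ^ of_bool (dotp u x) = zz K ^ binv (av K a x) * of_int (sgn_t K a u x)"
      unfolding sgn_t_def dotp_dotr by (simp add: mult.assoc neg1_pow)
  qed
  also have "\<dots> = (\<Sum>x\<in>vecs n. \<Sum>z\<in>vecs K. if av K a x = z then zz K ^ binv z * of_int (sgn_t K a u x) else 0)"
    by (intro sum.cong refl) (simp add: finite_vecs av_vecs)
  also have "\<dots> = (\<Sum>z\<in>vecs K. \<Sum>x\<in>vecs n. if av K a x = z then zz K ^ binv z * of_int (sgn_t K a u x) else 0)"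
    by (rule sum.swap)
  also have "\<dots> = (\<Sum>z\<in>vecs K. of_int (TT n K a u z) * zz K ^ binv z)"
    unfolding TT_def of_int_sum sum_distrib_right
    by (intro sum.cong refl) (simp add: algebra_simps)
  also have "\<dots> = ev K (PP n K a u)"
    unfolding PP_def ev_sum ev_monom ..
  finally show ?thesis .
qed


theorem proposition6:
  fixes n k :: nat and a :: "nat \<Rightarrow> bool list \<Rightarrow> bool"
  assumes "even n" and "k \<ge> 2"
    and "gbent n k (gfun k a)"
  shows "plateaued (n + k - 1) (k - 1) (gray n k a)"
proof -
  obtain K where k: "k = Suc K" using assms(2) by (cases k) auto
  obtain e where ne: "n = 2*e" using assms(1) by (elim evenE)
  have N1: "n + k - 1 = n + K" and N2: "k - 1 = K" using k by auto
  show ?thesis unfolding plateaued_def N1 N2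
  proof
    fix w assume w: "w \<in> vecs (n+K)"
    define u where "u = take n w"
    define z where "z = drop n w"
    have u: "u \<in> vecs n" and z: "z \<in> vecs K" using w unfolding u_def z_def vecs_def by auto
    have wuz: "w = u @ z" unfolding u_def z_def by simp
    have W: "walsh (n+K) (gray n k a) w = 2^K * TT n K a u z" unfolding wuz by (rule walsh_gray[OF u z k])
    have gb: "cmod (\<Sum>x\<in>vecs n. zeta k ^ gfun k a x * (-1) ^ of_bool (dotp u x)) = 2 powr (real n / 2)"
      using assms(3) u unfolding gbent_def by blast
    have "2 powr (real n / 2) = 2 powr (real e)" unfolding ne by simp
    also have "\<dots> = 2^e" by (simp add: powr_realpow)
    finally have cm: "cmod (ev K (PP n K a u)) = 2^e" using gb unfolding H_eq[OF k] by simp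
    have "ev K (PP n K a u) * cnj (ev K (PP n K a u)) = of_real ((cmod (ev K (PP n K a u)))^2)"
      by (rule complex_norm_square[symmetric])
    also have "\<dots> = of_real (((2::real)^2)^e)" unfolding cm by (simp only: power_mult[symmetric] mult.commute)
    also have "\<dots> = 4^e" by simp
    finally have E: "ev K (PP n K a u) * cnj (ev K (PP n K a u)) = 4^e" .
    have T: "TT n K a u z \<in> {0, 2^e, -(2^e)}"
      using NT[OF degree_PP E, of "binv z"] coeff_PP[OF z] by simp
    have q: "(real (n+K) + real K) / 2 = real (e + K)" unfolding ne by simp
    have p: "2 powr ((real (n+K) + real K) / 2) = 2^(e+K)" unfolding q by (rule powr_realpow) simp
    show "real_of_int (walsh (n+K) (gray n k a) w) \<in> {0, 2 powr ((real (n+K) + real K) / 2), - (2 powr ((real (n+K) + real K) / 2))}"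
      unfolding W p using T by (auto simp: power_add)
  qed
qed

end
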